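(* In the biased planner's myopic problem described in the context, for every $b\in[1-p,0.5]$, $\pi^0_B(b)\in\{p,1-b\}$.
   Context: A binary state $\omega\in\{G,B\}$; for an agent with public belief $b$ and private signal precision $q\in[0.5,1]$ (signal matches $\omega$ with probability $q$), the action is the signal if $1-q\le b\le q$, $G$ if $b>q$, $B$ if $b<1-q$. Let $z(b,q)=b+q-2bq$. The biased planner has baseline precision $p\in[0.5,1)$, cost $\beta:[0,1]\to[0,\infty)$ non-negative, increasing, continuous, concave with $\beta(0)=0$, and $C>0$; its instantaneous reward is $r_B(b,q)=-\beta(|q-p|)-Cz(b,q)$ if $q\ge\max(b,1-b)$, $-\beta(|q-p|)-C$ if $b<1-q$, and $-\beta(|q-p|)$ if $b>q$. The myopic optimal precision $\pi^0_B(b)$ is a maximizer of $q\mapsto r_B(b,q)$ over $[0.5,1]$. *)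

theory Defs
  imports "HOL-Analysis.Analysis"
begin

definition zfun :: "real \<Rightarrow> real \<Rightarrow> real" where
  "zfun b q = b + q - 2 * b * q"

text \<open>Instantaneous reward of the biased planner, with cost beta, baseline precision p, constant C.\<close>
definition rB :: "(real \<Rightarrow> real) \<Rightarrow> real \<Rightarrow> real \<Rightarrow> real \<Rightarrow> real \<Rightarrow> real" where
  "rB \<beta> p C b q =
     (if q \<ge> max b (1 - b) then - \<beta> \<bar>q - p\<bar> - C * zfun b q
      else if b < 1 - q then - \<beta> \<bar>q - p\<bar> - C
      else - \<beta> \<bar>q - p\<bar>)"

definition is_myopic_opt :: "(real \<Rightarrow> real) \<Rightarrow> real \<Rightarrow> real \<Rightarrow> real \<Rightarrow> real \<Rightarrow> bool" where
  "is_myopic_opt \<beta> p C b q \<longleftrightarrow>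
     q \<in> {1/2..1} \<and> (\<forall>q'\<in>{1/2..1}. rB \<beta> p C b q' \<le> rB \<beta> p C b q)"

end

theory Submission
  imports Defs
begin

theorem lemma13:
  fixes \<beta> :: "real \<Rightarrow> real" and p C b :: real
  assumes "1/2 \<le> p" and "p < 1" and "C > 0"
    and "\<forall>x\<in>{0..1}. \<beta> x \<ge> 0"
    and "mono_on {0..1} \<beta>"
    and "continuous_on {0..1} \<beta>"
    and "concave_on {0..1} \<beta>"
    and "\<beta> 0 = 0"
    and "1 - p \<le> b" and "b \<le> 1/2"
  shows "\<exists>q\<in>{p, 1 - b}. is_myopic_opt \<beta> p C b q"
proof -
  define r where "r = rB \<beta> p C b"
  define d where "d = p - (1 - b)"
  have d0: "0 \<le> d" "d \<le> 1" using assms unfolding d_def by auto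
  have mx: "max b (1 - b) = 1 - b" using assms by auto
  have rp: "r p = - C * zfun b p"
    using assms unfolding r_def rB_def mx by simp
  have r1: "r (1 - b) = - \<beta> d - C * zfun b (1 - b)"
  proof -
    have "\<bar>1 - b - p\<bar> = d" using d0 unfolding d_def by simp
    then show ?thesis using assms unfolding r_def rB_def mx by simp
  qed
  have bd: "\<beta> d \<ge> 0" using assms(4) d0 by auto
  have key: "r q \<le> max (r p) (r (1 - b))" if q: "q \<in> {1/2..1}" for q
  proof (cases "q < 1 - b")
    case True
    have "r q = - \<beta> (p - q) - C"
      using True q assms unfolding r_def rB_def mx by (simp add: abs_if)
    moreover have "\<beta> d \<le> \<beta> (p - q)"
      using True q assms(1,2,9,10) d0 by (intro mono_onD[OF assms(5)]) (auto simp: d_def)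
    moreover have "zfun b (1 - b) \<le> 1"
    proof -
      have "zfun b (1 - b) = 1 - 2 * b * (1 - b)" unfolding zfun_def by algebra
      moreover have "0 \<le> b * (1 - b)" using assms by (intro mult_nonneg_nonneg) auto
      ultimately show ?thesis by linarith
    qed
    moreover have "C * zfun b (1 - b) \<le> C * 1"
      using \<open>zfun b (1 - b) \<le> 1\<close> assms(3) by (intro mult_left_mono) auto
    ultimately have "r q \<le> r (1 - b)" using r1 by linarith
    then show ?thesis by linarith
  next
    case False
    then have rq: "r q = - \<beta> \<bar>q - p\<bar> - C * zfun b q"
      using q assms unfolding r_def rB_def mx by simp
    show ?thesis
    proof (cases "q \<ge> p")
      case True
      have "0 \<le> \<beta> \<bar>q - p\<bar>" using assms(4) True q assms(1,2) by auto
      moreover have "zfun b p \<le> zfun b q"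
      proof -
        have "zfun b q - zfun b p = (q - p) * (1 - 2 * b)" unfolding zfun_def by algebra
        moreover have "0 \<le> (q - p) * (1 - 2 * b)" using True assms by (intro mult_nonneg_nonneg) auto
        ultimately show ?thesis by linarith
      qed
      moreover have "C * zfun b p \<le> C * zfun b q"
        using \<open>zfun b p \<le> zfun b q\<close> assms(3) by (intro mult_left_mono) auto
      ultimately have "r q \<le> r p" using rq rp by linarith
      then show ?thesis by linarith
    next
      case qp: False
      show ?thesis
      proof (cases "d = 0")
        case True
        then have "q = p" using False qp unfolding d_def by auto
        then show ?thesis by simp
      next
        case dn: False
        then have dp: "d > 0" using d0 by auto
        define t where "t = (p - q) / d"
        have t0: "0 \<le> t" "t \<le> 1" using False qp dp unfolding t_def d_def by (auto simp: field_simps)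
        have pq: "p - q = (1 - t) *\<^sub>R 0 + t *\<^sub>R d" using dp unfolding t_def by simp
        have "\<beta> ((1 - t) *\<^sub>R 0 + t *\<^sub>R d) \<ge> (1 - t) * \<beta> 0 + t * \<beta> d"
          using t0 d0 by (intro concave_onD[OF assms(7)]) auto
        then have bq: "\<beta> (p - q) \<ge> t * \<beta> d" using pq assms(8) by simp
        have zq: "zfun b q = zfun b p - t * (d * (1 - 2 * b))"
          using dp unfolding t_def zfun_def by (simp add: field_simps)
        have z1: "zfun b (1 - b) = zfun b p - d * (1 - 2 * b)"
          unfolding d_def zfun_def by algebra
        have aq: "\<bar>q - p\<bar> = p - q" using qp by simp
        have "r q = - \<beta> (p - q) - C * zfun b p + t * (C * (d * (1 - 2 * b)))"
          using rq aq zq by (simp add: algebra_simps)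
        also have "\<dots> \<le> - t * \<beta> d - C * zfun b p + t * (C * (d * (1 - 2 * b)))"
          using bq by simp
        also have "\<dots> = (1 - t) * r p + t * r (1 - b)"
        proof -
          have e: "r (1 - b) = - \<beta> d - C * zfun b p + C * (d * (1 - 2 * b))"
            using r1 z1 by (simp add: algebra_simps)
          show ?thesis unfolding e rp by (simp add: algebra_simps)
        qed
        also have "\<dots> \<le> (1 - t) * max (r p) (r (1 - b)) + t * max (r p) (r (1 - b))"
          using t0 by (intro add_mono mult_left_mono) auto
        also have "\<dots> = max (r p) (r (1 - b))" by (simp add: algebra_simps)
        finally show ?thesis .
      qed
    qed
  qed
  have pin: "p \<in> {1/2..1}" and bin: "1 - b \<in> {1/2..1}" using assms by auto
  show ?thesis
  proof (cases "r (1 - b) \<le> r p")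
    case True
    then have "is_myopic_opt \<beta> p C b p"
      unfolding is_myopic_opt_def using pin key unfolding r_def by fastforce
    then show ?thesis by blast
  next
    case False
    then have "is_myopic_opt \<beta> p C b (1 - b)"
      unfolding is_myopic_opt_def using bin key unfolding r_def
      by (metis linorder_not_le max.absorb2 nless_le)
    then show ?thesis by blast
  qed
qed

end
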